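(* Let $f:\mathbb{R}^d\to\mathbb{R}$ be differentiable with $f$ and $\nabla f$ both Lipschitz, and suppose $f\ge c$ everywhere for some $c\in(0,1]$. Let $L$ be the maximum of the Lipschitz constants of $f$ and $\nabla f$. Then the Föllmer drift $b(x,t)=\nabla\log Q_{1-t}f(x)$, $x\in\mathbb{R}^d$, $t\in[0,1]$, satisfies $\|b(x,t)\|\le L/c$ for all $x,t$, and $\|b(x,t)-b(x',t)\|\le (L/c+L^2/c^2)\|x-x'\|$ for all $x,x'\in\mathbb{R}^d$, $t\in[0,1]$.
   Context: $Q_t$ is the Euclidean heat semigroup: $Q_tf(x)=\mathbf{E}[f(x+\sqrt tZ)]$ with $Z$ a standard Gaussian vector in $\mathbb{R}^d$; the gradient is in $x$. *)

theory Defs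
  imports "HOL-Analysis.Analysis"
begin

definition std_gaussian :: "'a::euclidean_space measure" where
  "std_gaussian = density lborel
     (\<lambda>z. ennreal ((2 * pi) powr (- real DIM('a) / 2) * exp (- (norm z ^ 2) / 2)))"

definition heat_sg :: "real \<Rightarrow> ('a::euclidean_space \<Rightarrow> real) \<Rightarrow> 'a \<Rightarrow> real" where
  "heat_sg t f x = (\<integral>z. f (x + sqrt t *\<^sub>R z) \<partial>std_gaussian)"

definition grad :: "('a::euclidean_space \<Rightarrow> real) \<Rightarrow> 'a \<Rightarrow> 'a" where
  "grad g x = (SOME v. (g has_derivative (\<lambda>h. v \<bullet> h)) (at x))"

definition foellmer_drift :: "('a::euclidean_space \<Rightarrow> real) \<Rightarrow> 'a \<Rightarrow> real \<Rightarrow> 'a" where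
  "foellmer_drift f x t = grad (\<lambda>y. ln (heat_sg (1 - t) f y)) x"

end

theory Submission
  imports Defs "HOL-Probability.Probability"
begin

lemma norm_sq_sum: "norm (z::'a::euclidean_space) ^ 2 = (\<Sum>b\<in>Basis. (z \<bullet> b)^2)"
proof -
  have "norm z ^ 2 = z \<bullet> z" by (rule power2_norm_eq_inner)
  also have "\<dots> = (\<Sum>b\<in>Basis. (z \<bullet> b) * (z \<bullet> b))" by (rule euclidean_inner)
  finally show ?thesis by (simp add: power2_eq_square)
qed

lemma gauss_nn:
  assumes s: "0 < s"
  shows "(\<integral>\<^sup>+z. ennreal (exp (- (norm (z::'a::euclidean_space) ^ 2) / (2 * s\<^sup>2))) \<partial>lborel)
     = ennreal (sqrt (2 * pi * s\<^sup>2) ^ DIM('a))"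
proof -
  have 1: "(\<integral>\<^sup>+t. ennreal (exp (- (t ^ 2) / (2 * s\<^sup>2))) \<partial>lborel) = ennreal (sqrt (2 * pi * s\<^sup>2))"
  proof -
    have eq: "\<And>t. exp (- (t ^ 2) / (2 * s\<^sup>2)) = sqrt (2 * pi * s\<^sup>2) * normal_density 0 s t"
      using s by (simp add: normal_density_def)
    have "(\<integral>\<^sup>+t. ennreal (exp (- (t ^ 2) / (2 * s\<^sup>2))) \<partial>lborel)
        = (\<integral>\<^sup>+t. ennreal (sqrt (2 * pi * s\<^sup>2) * normal_density 0 s t) \<partial>lborel)" by (simp only: eq)
    also have "\<dots> = ennreal (\<integral>t. sqrt (2 * pi * s\<^sup>2) * normal_density 0 s t \<partial>lborel)"
      using s by (intro nn_integral_eq_integral integrable_mult_right) auto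
    also have "\<dots> = ennreal (sqrt (2 * pi * s\<^sup>2))" using s by simp
    finally show ?thesis .
  qed
  have pe: "(\<lambda>z::'a. ennreal (exp (- (norm z ^ 2) / (2 * s\<^sup>2))))
      = (\<lambda>z. \<Prod>b\<in>Basis. ennreal (exp (- ((z \<bullet> b) ^ 2) / (2 * s\<^sup>2))))"
  proof
    fix z :: 'a
    have "exp (- (norm z ^ 2) / (2 * s\<^sup>2)) = exp (\<Sum>b\<in>Basis. - ((z \<bullet> b) ^ 2) / (2 * s\<^sup>2))"
      by (simp add: norm_sq_sum sum_divide_distrib sum_negf)
    also have "\<dots> = (\<Prod>b\<in>Basis. exp (- ((z \<bullet> b) ^ 2) / (2 * s\<^sup>2)))"
      by (rule exp_sum) simp
    finally have E: "exp (- (norm z ^ 2) / (2 * s\<^sup>2)) = (\<Prod>b\<in>Basis. exp (- ((z \<bullet> b) ^ 2) / (2 * s\<^sup>2)))" .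
    show "ennreal (exp (- (norm z ^ 2) / (2 * s\<^sup>2))) = (\<Prod>b\<in>Basis. ennreal (exp (- ((z \<bullet> b) ^ 2) / (2 * s\<^sup>2))))"
      unfolding E by (rule prod_ennreal[symmetric]) simp
  qed
  have m: "(\<lambda>t. ennreal (exp (- (t ^ 2) / (2 * s\<^sup>2)))) \<in> borel_measurable borel"
    by measurable
  have "(\<integral>\<^sup>+z. ennreal (exp (- (norm (z::'a) ^ 2) / (2 * s\<^sup>2))) \<partial>lborel)
     = (\<integral>\<^sup>+z. (\<Prod>b\<in>Basis. ennreal (exp (- (((z::'a) \<bullet> b) ^ 2) / (2 * s\<^sup>2)))) \<partial>lborel)"
    by (simp only: pe)
  also have "\<dots> = (\<Prod>b\<in>(Basis::'a set). (\<integral>\<^sup>+t. ennreal (exp (- (t ^ 2) / (2 * s\<^sup>2))) \<partial>lborel))"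
    by (rule nn_integral_lborel_prod) (rule m, simp)
  also have "\<dots> = ennreal (sqrt (2 * pi * s\<^sup>2)) ^ DIM('a)"
    by (simp only: 1 prod_constant)
  also have "\<dots> = ennreal (sqrt (2 * pi * s\<^sup>2) ^ DIM('a))"
    by (rule ennreal_power) simp
  finally show ?thesis .
qed

lemma kappa_eq: "(2 * pi) powr (- real n / 2) * sqrt (2 * pi) ^ n = 1"
proof -
  have "sqrt (2 * pi) ^ n = ((2 * pi) powr (1/2)) ^ n" by (simp add: powr_half_sqrt)
  also have "\<dots> = (2 * pi) powr (real n * (1/2))" by (rule powr_power) simp
  finally have "sqrt (2 * pi) ^ n = (2 * pi) powr (real n / 2)" by simp
  then show ?thesis by (simp add: powr_add[symmetric])
qed

lemma gauss_sets[simp]: "sets (std_gaussian :: 'a::euclidean_space measure) = sets borel"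
  by (simp add: std_gaussian_def)

lemma gauss_space[simp]: "space (std_gaussian :: 'a::euclidean_space measure) = UNIV"
  by (simp add: std_gaussian_def)

lemma gauss_meas:
  assumes "continuous_on UNIV g"
  shows "g \<in> borel_measurable (std_gaussian :: 'a::euclidean_space measure)"
proof -
  have "g \<in> borel_measurable borel" using assms by (rule borel_measurable_continuous_onI)
  then show ?thesis by (simp only: measurable_cong_sets[OF gauss_sets refl])
qed

lemma gauss_prob: "prob_space (std_gaussian :: 'a::euclidean_space measure)"
proof
  let ?k = "(2 * pi) powr (- real DIM('a) / 2)"
  have "emeasure (std_gaussian :: 'a measure) (space std_gaussian)
      = (\<integral>\<^sup>+z. ennreal (?k * exp (- (norm (z::'a) ^ 2) / 2)) \<partial>lborel)"
    unfolding std_gaussian_def by (simp add: emeasure_density)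
  also have "\<dots> = (\<integral>\<^sup>+z. ennreal ?k * ennreal (exp (- (norm (z::'a) ^ 2) / (2 * 1\<^sup>2))) \<partial>lborel)"
    by (simp add: ennreal_mult)
  also have "\<dots> = ennreal ?k * (\<integral>\<^sup>+z. ennreal (exp (- (norm (z::'a) ^ 2) / (2 * 1\<^sup>2))) \<partial>lborel)"
    by (rule nn_integral_cmult) simp
  also have "\<dots> = ennreal ?k * ennreal (sqrt (2 * pi * 1\<^sup>2) ^ DIM('a))"
    by (subst gauss_nn) auto
  also have "\<dots> = ennreal (?k * sqrt (2 * pi) ^ DIM('a))"
    by (simp add: ennreal_mult)
  also have "\<dots> = 1" by (simp only: kappa_eq) simp
  finally show "emeasure (std_gaussian :: 'a measure) (space std_gaussian) = 1" .
qed

lemma exp_quarter: "r * exp (- (r^2) / 2) \<le> exp (- (r^2) / 4)" for r :: real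
proof -
  have "r \<le> 1 + r^2/4" using sum_power2_ge_zero[of "1 - r/2" 0] by (simp add: power2_eq_square algebra_simps)
  also have "\<dots> \<le> exp (r^2/4)" by (rule exp_ge_add_one_self)
  finally have a: "r \<le> exp (r^2/4)" .
  have "r * exp (- (r^2) / 2) = r * exp (- (r^2)/4) * exp (- (r^2)/4)"
    by (simp add: mult.assoc exp_add[symmetric])
  also have "\<dots> \<le> exp (r^2/4) * exp (- (r^2)/4) * exp (- (r^2)/4)"
    by (intro mult_right_mono a) auto
  also have "\<dots> = exp (- (r^2)/4)" by (simp add: exp_add[symmetric])
  finally show ?thesis .
qed

lemma gauss_norm_int: "integrable (std_gaussian :: 'a::euclidean_space measure) (\<lambda>z. norm z)"
proof -
  let ?k = "(2 * pi) powr (- real DIM('a) / 2)"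
  have "(\<integral>\<^sup>+z. ennreal (norm z) \<partial>(std_gaussian :: 'a measure))
      = (\<integral>\<^sup>+z. ennreal (?k * exp (- (norm (z::'a) ^ 2) / 2)) * ennreal (norm z) \<partial>lborel)"
    unfolding std_gaussian_def by (subst nn_integral_density) auto
  also have "\<dots> \<le> (\<integral>\<^sup>+z. ennreal ?k * ennreal (exp (- (norm (z::'a) ^ 2) / (2 * (sqrt 2)\<^sup>2))) \<partial>lborel)"
  proof (rule nn_integral_mono)
    fix z :: 'a
    have "?k * exp (- (norm z ^ 2) / 2) * norm z \<le> ?k * exp (- (norm z ^ 2) / 4)"
      using exp_quarter[of "norm z"] by (simp add: mult.assoc mult.commute[of "norm z"])
    then show "ennreal (?k * exp (- (norm z ^ 2) / 2)) * ennreal (norm z)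
        \<le> ennreal ?k * ennreal (exp (- (norm z ^ 2) / (2 * (sqrt 2)\<^sup>2)))"
      by (simp add: ennreal_mult[symmetric] ennreal_leI)
  qed
  also have "\<dots> = ennreal ?k * (\<integral>\<^sup>+z. ennreal (exp (- (norm (z::'a) ^ 2) / (2 * (sqrt 2)\<^sup>2))) \<partial>lborel)"
    by (rule nn_integral_cmult) simp
  also have "\<dots> = ennreal ?k * ennreal (sqrt (2 * pi * (sqrt 2)\<^sup>2) ^ DIM('a))"
    by (subst gauss_nn) auto
  also have "\<dots> < \<infinity>" by (simp add: ennreal_mult[symmetric])
  finally have fin: "(\<integral>\<^sup>+z. ennreal (norm z) \<partial>(std_gaussian :: 'a measure)) < \<infinity>" .
  have meas: "(\<lambda>z::'a. norm z) \<in> borel_measurable std_gaussian"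
    by (rule gauss_meas) (rule continuous_on_norm[OF continuous_on_id])
  have ae: "AE z in (std_gaussian :: 'a measure). 0 \<le> norm z" by (rule AE_I2) simp
  show ?thesis by (rule integrableI_nonneg[OF meas ae fin])
qed

lemma gauss_fin: "finite_measure (std_gaussian :: 'a::euclidean_space measure)"
  using gauss_prob by (rule prob_space.finite_measure)

lemma gbound:
  fixes g :: "'a::euclidean_space \<Rightarrow> 'b::{banach, second_countable_topology}"
  assumes "integrable std_gaussian g" "\<And>z. norm (g z) \<le> K"
  shows "norm (integral\<^sup>L std_gaussian g) \<le> K"
proof -
  interpret prob_space "std_gaussian :: 'a measure" by (rule gauss_prob)
  have "norm (integral\<^sup>L std_gaussian g) \<le> (\<integral>z. norm (g z) \<partial>std_gaussian)"
    by (rule integral_norm_bound)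
  also have "\<dots> \<le> K" using assms by (intro integral_le_const) auto
  finally show ?thesis .
qed

lemma grad_eq:
  assumes a: "(g has_derivative (\<lambda>h. v \<bullet> h)) (at x)"
  shows "grad g x = v"
proof -
  have ex: "(g has_derivative (\<lambda>h. grad g x \<bullet> h)) (at x)"
    unfolding grad_def using a by (rule someI)
  from has_derivative_unique[OF ex a] have "(\<lambda>h. grad g x \<bullet> h) = (\<lambda>h. v \<bullet> h)" .
  then have "grad g x \<bullet> (grad g x - v) = v \<bullet> (grad g x - v)" by metis
  then have "(grad g x - v) \<bullet> (grad g x - v) = 0" by (simp add: inner_diff_left)
  then show ?thesis by simp
qed

context
  fixes f :: "'a::euclidean_space \<Rightarrow> real" and f' :: "'a \<Rightarrow> 'a" and L1 L2 :: real
  assumes deriv: "\<And>x. (f has_derivative (\<lambda>h. f' x \<bullet> h)) (at x)"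
    and lip_f: "L1-lipschitz_on UNIV f"
    and lip_grad: "L2-lipschitz_on UNIV f'"
begin

lemma L1_nn: "0 \<le> L1" using lip_f by (rule lipschitz_on_nonneg)
lemma L2_nn: "0 \<le> L2" using lip_grad by (rule lipschitz_on_nonneg)

lemma f_lip: "\<bar>f x - f y\<bar> \<le> L1 * norm (x - y)"
  using lipschitz_onD[OF lip_f, of x y] by (simp add: dist_norm dist_real_def)

lemma f'_lip: "norm (f' x - f' y) \<le> L2 * norm (x - y)"
  using lipschitz_onD[OF lip_grad, of x y] by (simp add: dist_norm)

lemma f_lip': "\<bar>f (x + w) - f (y + w)\<bar> \<le> L1 * norm (x - y)"
  using f_lip[of "x + w" "y + w"] by simp

lemma f'_lip': "norm (f' (x + w) - f' (y + w)) \<le> L2 * norm (x - y)"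
  using f'_lip[of "x + w" "y + w"] by simp

lemma f_cont: "continuous_on UNIV f" using lip_f by (rule lipschitz_on_continuous_on)
lemma f'_cont: "continuous_on UNIV f'" using lip_grad by (rule lipschitz_on_continuous_on)

lemma grad_le: "norm (f' y) \<le> L1"
proof (cases "f' y = 0")
  case True then show ?thesis using L1_nn by simp
next
  case False
  define v where "v = f' y"
  have nv: "norm v > 0" using False by (simp add: v_def)
  show ?thesis
  proof (rule field_le_epsilon)
    fix e :: real assume e: "0 < e"
    from deriv[of y] e obtain d where d: "d > 0"
      and dd: "\<And>z. norm (z - y) < d \<Longrightarrow> norm (f z - f y - v \<bullet> (z - y)) \<le> e * norm (z - y)"
      unfolding has_derivative_at_alt v_def by blast
    define \<tau> where "\<tau> = d / (2 * norm v)"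
    have \<tau>: "\<tau> > 0" using d nv by (simp add: \<tau>_def)
    define z where "z = y + \<tau> *\<^sub>R v"
    have nz: "norm (z - y) = d/2" using nv d by (simp add: z_def \<tau>_def)
    have A: "\<bar>f z - f y - v \<bullet> (z - y)\<bar> \<le> e * (d/2)" using dd[of z] nz d by simp
    have B: "v \<bullet> (z - y) = \<tau> * norm v ^ 2" by (simp add: z_def power2_norm_eq_inner)
    have C: "\<bar>f z - f y\<bar> \<le> L1 * (d/2)" using f_lip[of z y] nz by simp
    have "\<tau> * norm v ^ 2 \<le> (L1 + e) * (d/2)"
      using A B C abs_ge_self[of "f z - f y"] abs_ge_minus_self[of "f z - f y - v \<bullet> (z - y)"]
      by (simp add: algebra_simps)
    moreover have "\<tau> * norm v ^ 2 = (d/2) * norm v" using nv by (simp add: \<tau>_def power2_eq_square)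
    ultimately have "(d/2) * norm v \<le> (d/2) * (L1 + e)" by (simp add: mult.commute)
    then show "norm (f' y) \<le> L1 + e" using d by (simp add: v_def)
  qed
qed

lemma taylor: "\<bar>f b - f a - f' a \<bullet> (b - a)\<bar> \<le> L2 * norm (b - a)^2"
proof -
  let ?S = "cball a (norm (b - a))"
  have "norm (f b - f a - (\<lambda>k. f' a \<bullet> k) (b - a)) \<le> norm (b - a) * (L2 * norm (b - a))"
  proof (rule differentiable_bound_linearization[where S="?S" and f'="\<lambda>x k. f' x \<bullet> k"])
    fix t :: real assume t: "t \<in> {0..1}"
    have "norm (t *\<^sub>R (b - a)) \<le> norm (b - a)" using t by (simp add: mult_left_le_one_le)
    then show "a + t *\<^sub>R (b - a) \<in> ?S" by (simp add: dist_norm)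
  next
    fix x assume "x \<in> ?S"
    show "(f has_derivative (\<lambda>k. f' x \<bullet> k)) (at x within ?S)"
      using deriv[of x] by (rule has_derivative_at_withinI)
  next
    fix x assume x: "x \<in> ?S"
    show "onorm ((\<lambda>k. f' x \<bullet> k) - (\<lambda>k. f' a \<bullet> k)) \<le> L2 * norm (b - a)"
    proof (rule onorm_bound)
      show "0 \<le> L2 * norm (b - a)" using L2_nn by simp
      fix k
      have "norm (((\<lambda>k. f' x \<bullet> k) - (\<lambda>k. f' a \<bullet> k)) k) = \<bar>(f' x - f' a) \<bullet> k\<bar>"
        by (simp add: inner_diff_left)
      also have "\<dots> \<le> norm (f' x - f' a) * norm k" by (rule Cauchy_Schwarz_ineq2)
      also have "\<dots> \<le> L2 * norm (b - a) * norm k"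
      proof (rule mult_right_mono)
        have "norm (x - a) \<le> norm (b - a)" using x by (simp add: dist_norm norm_minus_commute)
        then have "L2 * norm (x - a) \<le> L2 * norm (b - a)" using L2_nn by (rule mult_left_mono)
        then show "norm (f' x - f' a) \<le> L2 * norm (b - a)" using f'_lip[of x a] by linarith
      qed simp
      finally show "norm (((\<lambda>k. f' x \<bullet> k) - (\<lambda>k. f' a \<bullet> k)) k) \<le> L2 * norm (b - a) * norm k" .
    qed
  next
    show "a \<in> ?S" by simp
  qed
  then show ?thesis by (simp add: power2_eq_square mult_ac)
qed

lemma intF: "integrable std_gaussian (\<lambda>z. f (x + r *\<^sub>R z))"
proof -
  interpret prob_space "std_gaussian::'a measure" by (rule gauss_prob)
  have int2: "integrable std_gaussian (\<lambda>z. (\<bar>f 0\<bar> + L1 * norm x) + L1 * \<bar>r\<bar> * norm z)"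
    using gauss_norm_int finite_measure.integrable_const[OF gauss_fin]
    by (intro Bochner_Integration.integrable_add integrable_mult_right) auto
  show ?thesis
  proof (rule Bochner_Integration.integrable_bound[OF int2])
    have "continuous_on UNIV (\<lambda>z. f (x + r *\<^sub>R z))"
      by (intro continuous_on_compose2[OF f_cont] continuous_intros) auto
    then show "(\<lambda>z. f (x + r *\<^sub>R z)) \<in> borel_measurable std_gaussian" by (rule gauss_meas)
    show "AE z in std_gaussian. norm (f (x + r *\<^sub>R z)) \<le> norm ((\<bar>f 0\<bar> + L1 * norm x) + L1 * \<bar>r\<bar> * norm z)"
    proof (intro AE_I2)
      fix z
      have h1: "\<bar>f (x + r *\<^sub>R z) - f 0\<bar> \<le> L1 * norm (x + r *\<^sub>R z)"
        using f_lip[of "x + r *\<^sub>R z" 0] by simp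
      have h2: "\<bar>f (x + r *\<^sub>R z)\<bar> - \<bar>f 0\<bar> \<le> \<bar>f (x + r *\<^sub>R z) - f 0\<bar>"
        by (rule abs_triangle_ineq2)
      have h3: "L1 * norm (x + r *\<^sub>R z) \<le> L1 * (norm x + \<bar>r\<bar> * norm z)"
        using L1_nn norm_triangle_ineq[of x "r *\<^sub>R z"] by (intro mult_left_mono) auto
      have h4: "L1 * (norm x + \<bar>r\<bar> * norm z) = L1 * norm x + L1 * \<bar>r\<bar> * norm z"
        by (simp add: distrib_left mult.assoc)
      have nn: "0 \<le> (\<bar>f 0\<bar> + L1 * norm x) + L1 * \<bar>r\<bar> * norm z"
        using L1_nn by (intro add_nonneg_nonneg mult_nonneg_nonneg) auto
      have "\<bar>f (x + r *\<^sub>R z)\<bar> \<le> (\<bar>f 0\<bar> + L1 * norm x) + L1 * \<bar>r\<bar> * norm z"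
        using h1 h2 h3 h4 by linarith
      then show "norm (f (x + r *\<^sub>R z)) \<le> norm ((\<bar>f 0\<bar> + L1 * norm x) + L1 * \<bar>r\<bar> * norm z)"
        by (simp only: real_norm_def abs_of_nonneg[OF nn])
    qed
  qed
qed

lemma intV: "integrable std_gaussian (\<lambda>z. f' (x + r *\<^sub>R z))"
proof -
  interpret prob_space "std_gaussian::'a measure" by (rule gauss_prob)
  show ?thesis
  proof (rule integrable_const_bound)
    show "AE z in std_gaussian. norm (f' (x + r *\<^sub>R z)) \<le> L1" by (intro AE_I2 grad_le)
    have "continuous_on UNIV (\<lambda>z. f' (x + r *\<^sub>R z))"
      by (intro continuous_on_compose2[OF f'_cont] continuous_intros) auto
    then show "(\<lambda>z. f' (x + r *\<^sub>R z)) \<in> borel_measurable std_gaussian" by (rule gauss_meas)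
  qed
qed

lemma F_lip: "\<bar>(\<integral>z. f (x + r *\<^sub>R z) \<partial>std_gaussian) - (\<integral>z. f (y + r *\<^sub>R z) \<partial>std_gaussian)\<bar> \<le> L1 * norm (x - y)"
proof -
  have "(\<integral>z. f (x + r *\<^sub>R z) \<partial>std_gaussian) - (\<integral>z. f (y + r *\<^sub>R z) \<partial>std_gaussian)
     = (\<integral>z. f (x + r *\<^sub>R z) - f (y + r *\<^sub>R z) \<partial>std_gaussian)"
    by (rule Bochner_Integration.integral_diff[OF intF intF, symmetric])
  also have "norm \<dots> \<le> L1 * norm (x - y)"
    by (rule gbound[OF Bochner_Integration.integrable_diff[OF intF intF]]) (metis f_lip' real_norm_def)
  finally show ?thesis by simp
qed

lemma V_lip: "norm ((\<integral>z. f' (x + r *\<^sub>R z) \<partial>std_gaussian) - (\<integral>z. f' (y + r *\<^sub>R z) \<partial>std_gaussian)) \<le> L2 * norm (x - y)"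
proof -
  have "(\<integral>z. f' (x + r *\<^sub>R z) \<partial>std_gaussian) - (\<integral>z. f' (y + r *\<^sub>R z) \<partial>std_gaussian)
     = (\<integral>z. f' (x + r *\<^sub>R z) - f' (y + r *\<^sub>R z) \<partial>std_gaussian)"
    by (rule Bochner_Integration.integral_diff[OF intV intV, symmetric])
  also have "norm \<dots> \<le> L2 * norm (x - y)"
    by (rule gbound[OF Bochner_Integration.integrable_diff[OF intV intV]]) (rule f'_lip')
  finally show ?thesis .
qed

lemma V_bound: "norm (\<integral>z. f' (x + r *\<^sub>R z) \<partial>std_gaussian) \<le> L1"
  by (rule gbound[OF intV]) (rule grad_le)

lemma F_ge: "(\<And>x. c \<le> f x) \<Longrightarrow> c \<le> (\<integral>z. f (x + r *\<^sub>R z) \<partial>std_gaussian)"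
proof -
  assume lo: "\<And>x. c \<le> f x"
  interpret prob_space "std_gaussian::'a measure" by (rule gauss_prob)
  show ?thesis using lo by (intro integral_ge_const intF AE_I2)
qed

lemma F_deriv:
  "((\<lambda>y. \<integral>z. f (y + r *\<^sub>R z) \<partial>std_gaussian) has_derivative
     (\<lambda>h. (\<integral>z. f' (x + r *\<^sub>R z) \<partial>std_gaussian) \<bullet> h)) (at x)"
  unfolding has_derivative_at_alt
proof (intro conjI allI impI)
  let ?V = "\<integral>z. f' (x + r *\<^sub>R z) \<partial>std_gaussian"
  show "bounded_linear (\<lambda>h. ?V \<bullet> h)" by (rule bounded_linear_inner_right)
  fix e :: real assume e: "e > 0"
  show "\<exists>d>0. \<forall>y. norm (y - x) < d \<longrightarrow>
     norm ((\<integral>z. f (y + r *\<^sub>R z) \<partial>std_gaussian) - (\<integral>z. f (x + r *\<^sub>R z) \<partial>std_gaussian) - ?V \<bullet> (y - x))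
       \<le> e * norm (y - x)"
  proof (intro exI[of _ "e / (L2 + 1)"] conjI allI impI)
    show "e / (L2 + 1) > 0" using e L2_nn by simp
    fix y assume y: "norm (y - x) < e / (L2 + 1)"
    have i1: "integrable std_gaussian (\<lambda>z. f (y + r *\<^sub>R z) - f (x + r *\<^sub>R z))"
      by (rule Bochner_Integration.integrable_diff[OF intF intF])
    have i2: "integrable std_gaussian (\<lambda>z. f' (x + r *\<^sub>R z) \<bullet> (y - x))"
      by (rule integrable_inner_left) (rule intV)
    have e1: "(\<integral>z. f (y + r *\<^sub>R z) - f (x + r *\<^sub>R z) \<partial>std_gaussian)
        = (\<integral>z. f (y + r *\<^sub>R z) \<partial>std_gaussian) - (\<integral>z. f (x + r *\<^sub>R z) \<partial>std_gaussian)"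
      by (rule Bochner_Integration.integral_diff[OF intF intF])
    have e2: "(\<integral>z. f' (x + r *\<^sub>R z) \<bullet> (y - x) \<partial>std_gaussian) = ?V \<bullet> (y - x)"
      by (rule integral_inner_left) (rule intV)
    have e3: "(\<integral>z. f (y + r *\<^sub>R z) - f (x + r *\<^sub>R z) - f' (x + r *\<^sub>R z) \<bullet> (y - x) \<partial>std_gaussian)
        = (\<integral>z. f (y + r *\<^sub>R z) - f (x + r *\<^sub>R z) \<partial>std_gaussian) - (\<integral>z. f' (x + r *\<^sub>R z) \<bullet> (y - x) \<partial>std_gaussian)"
      by (rule Bochner_Integration.integral_diff[OF i1 i2])
    have eq: "(\<integral>z. f (y + r *\<^sub>R z) \<partial>std_gaussian) - (\<integral>z. f (x + r *\<^sub>R z) \<partial>std_gaussian) - ?V \<bullet> (y - x)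
       = (\<integral>z. f (y + r *\<^sub>R z) - f (x + r *\<^sub>R z) - f' (x + r *\<^sub>R z) \<bullet> (y - x) \<partial>std_gaussian)"
      unfolding e3 e1 e2 ..
    have "norm (\<integral>z. f (y + r *\<^sub>R z) - f (x + r *\<^sub>R z) - f' (x + r *\<^sub>R z) \<bullet> (y - x) \<partial>std_gaussian)
        \<le> L2 * norm (y - x) ^ 2"
    proof (rule gbound)
      show "integrable std_gaussian (\<lambda>z. f (y + r *\<^sub>R z) - f (x + r *\<^sub>R z) - f' (x + r *\<^sub>R z) \<bullet> (y - x))"
        by (rule Bochner_Integration.integrable_diff[OF i1 i2])
      fix z
      show "norm (f (y + r *\<^sub>R z) - f (x + r *\<^sub>R z) - f' (x + r *\<^sub>R z) \<bullet> (y - x)) \<le> L2 * norm (y - x) ^ 2"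
        using taylor[of "y + r *\<^sub>R z" "x + r *\<^sub>R z"] by simp
    qed
    also have "\<dots> \<le> e * norm (y - x)"
    proof -
      have "L2 * norm (y - x) \<le> (L2 + 1) * norm (y - x)" by (simp add: algebra_simps)
      also have "\<dots> \<le> e"
      proof -
        have "norm (y - x) * (L2 + 1) < e" using y L2_nn by (subst (asm) pos_less_divide_eq) auto
        then show ?thesis by (simp add: mult.commute)
      qed
      finally have "L2 * norm (y - x) * norm (y - x) \<le> e * norm (y - x)" by (rule mult_right_mono) simp
      then show ?thesis by (simp add: power2_eq_square mult.assoc)
    qed
    finally show "norm ((\<integral>z. f (y + r *\<^sub>R z) \<partial>std_gaussian) - (\<integral>z. f (x + r *\<^sub>R z) \<partial>std_gaussian) - ?V \<bullet> (y - x))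
       \<le> e * norm (y - x)" unfolding eq .
  qed
qed


lemma drift_eq:
  assumes c: "0 < c" and lo: "\<And>x. c \<le> f x"
  shows "foellmer_drift f x t = inverse (\<integral>z. f (x + sqrt (1 - t) *\<^sub>R z) \<partial>std_gaussian) *\<^sub>R
            (\<integral>z. f' (x + sqrt (1 - t) *\<^sub>R z) \<partial>std_gaussian)"
proof -
  let ?r = "sqrt (1 - t)"
  let ?F = "\<integral>z. f (x + ?r *\<^sub>R z) \<partial>std_gaussian"
  let ?V = "\<integral>z. f' (x + ?r *\<^sub>R z) \<partial>std_gaussian"
  have "c \<le> ?F" using lo by (rule F_ge)
  then have pos: "0 < ?F" using c by linarith
  have "((\<lambda>y. ln (\<integral>z. f (y + ?r *\<^sub>R z) \<partial>std_gaussian)) has_derivative (\<lambda>h. (?V \<bullet> h) * inverse ?F)) (at x)"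
    by (rule has_derivative_ln[OF pos F_deriv])
  moreover have "(\<lambda>h. (?V \<bullet> h) * inverse ?F) = (\<lambda>h. (inverse ?F *\<^sub>R ?V) \<bullet> h)"
    by (simp add: fun_eq_iff)
  ultimately have "((\<lambda>y. ln (heat_sg (1 - t) f y)) has_derivative (\<lambda>h. (inverse ?F *\<^sub>R ?V) \<bullet> h)) (at x)"
    unfolding heat_sg_def by simp
  then show ?thesis unfolding foellmer_drift_def by (rule grad_eq)
qed

end

theorem lemma2:
  fixes f :: "'a::euclidean_space \<Rightarrow> real" and f' :: "'a \<Rightarrow> 'a"
    and L1 L2 c :: real
  assumes deriv: "\<And>x. (f has_derivative (\<lambda>h. f' x \<bullet> h)) (at x)"
    and lip_f: "L1-lipschitz_on UNIV f"
    and lip_grad: "L2-lipschitz_on UNIV f'"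
    and c_pos: "0 < c" and c_le: "c \<le> 1"
    and lower: "\<And>x. c \<le> f x"
  shows "(\<forall>x t. t \<in> {0..1} \<longrightarrow> norm (foellmer_drift f x t) \<le> max L1 L2 / c)
       \<and> (\<forall>x x' t. t \<in> {0..1} \<longrightarrow>
           norm (foellmer_drift f x t - foellmer_drift f x' t)
             \<le> (max L1 L2 / c + (max L1 L2)^2 / c^2) * norm (x - x'))"
proof -
  note ctx = deriv lip_f lip_grad
  let ?M = "max L1 L2"
  have L1nn: "0 \<le> L1" using lip_f by (rule lipschitz_on_nonneg)
  have L2nn: "0 \<le> L2" using lip_grad by (rule lipschitz_on_nonneg)
  have de: "\<And>x t. foellmer_drift f x t = inverse (\<integral>z. f (x + sqrt (1 - t) *\<^sub>R z) \<partial>std_gaussian) *\<^sub>R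
            (\<integral>z. f' (x + sqrt (1 - t) *\<^sub>R z) \<partial>std_gaussian)"
    by (rule drift_eq[OF ctx c_pos lower])
  have Fge: "\<And>x r. c \<le> (\<integral>z. f (x + r *\<^sub>R z) \<partial>std_gaussian)"
    by (rule F_ge[OF ctx lower])
  have Vb: "\<And>x r. norm (\<integral>z. f' (x + r *\<^sub>R z) \<partial>std_gaussian) \<le> L1"
    by (rule V_bound[OF ctx])
  show ?thesis
  proof (intro conjI allI impI)
    fix x :: 'a and t :: real
    let ?r = "sqrt (1 - t)"
    define A where "A = (\<integral>z. f (x + ?r *\<^sub>R z) \<partial>std_gaussian)"
    define V where "V = (\<integral>z. f' (x + ?r *\<^sub>R z) \<partial>std_gaussian)"
    have cA: "c \<le> A" unfolding A_def by (rule Fge)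
    have nV: "norm V \<le> L1" unfolding V_def by (rule Vb)
    have "norm (foellmer_drift f x t) = norm V / A"
      using cA c_pos by (simp add: de A_def[symmetric] V_def[symmetric] divide_inverse mult.commute)
    also have "\<dots> \<le> L1 / c" using cA c_pos nV L1nn by (intro frac_le) auto
    also have "\<dots> \<le> ?M / c" using c_pos by (intro divide_right_mono) auto
    finally show "norm (foellmer_drift f x t) \<le> ?M / c" .
  next
    fix x x' :: 'a and t :: real
    let ?r = "sqrt (1 - t)"
    define A where "A = (\<integral>z. f (x + ?r *\<^sub>R z) \<partial>std_gaussian)"
    define V where "V = (\<integral>z. f' (x + ?r *\<^sub>R z) \<partial>std_gaussian)"
    define A' where "A' = (\<integral>z. f (x' + ?r *\<^sub>R z) \<partial>std_gaussian)"
    define V' where "V' = (\<integral>z. f' (x' + ?r *\<^sub>R z) \<partial>std_gaussian)"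
    define d where "d = norm (x - x')"
    have d0: "0 \<le> d" by (simp add: d_def)
    have cA: "c \<le> A" unfolding A_def by (rule Fge)
    have cA': "c \<le> A'" unfolding A'_def by (rule Fge)
    have nV': "norm V' \<le> L1" unfolding V'_def by (rule Vb)
    have dV: "norm (V - V') \<le> L2 * d" unfolding V_def V'_def d_def by (rule V_lip[OF ctx])
    have dA: "\<bar>A' - A\<bar> \<le> L1 * d"
      using F_lip[OF ctx, of x' ?r x] unfolding A_def A'_def d_def by (simp add: norm_minus_commute)
    have Apos: "0 < A" "0 < A'" using cA cA' c_pos by linarith+
    have "foellmer_drift f x t - foellmer_drift f x' t = inverse A *\<^sub>R V - inverse A' *\<^sub>R V'"
      by (simp add: de A_def V_def A'_def V'_def)
    also have "\<dots> = inverse A *\<^sub>R (V - V') + (inverse A - inverse A') *\<^sub>R V'"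
      by (simp add: algebra_simps)
    finally have eq: "foellmer_drift f x t - foellmer_drift f x' t = inverse A *\<^sub>R (V - V') + (inverse A - inverse A') *\<^sub>R V'" .
    have t1: "norm (inverse A *\<^sub>R (V - V')) \<le> inverse c * (L2 * d)"
    proof -
      have "norm (inverse A *\<^sub>R (V - V')) = inverse A * norm (V - V')" using Apos by simp
      also have "\<dots> \<le> inverse c * (L2 * d)"
        using dV Apos cA c_pos by (intro mult_mono le_imp_inverse_le) auto
      finally show ?thesis .
    qed
    have ia: "\<bar>inverse A - inverse A'\<bar> \<le> L1 * d / (c * c)"
    proof -
      have "inverse A - inverse A' = (A' - A) / (A * A')" using Apos by (simp add: field_simps)
      then have "\<bar>inverse A - inverse A'\<bar> = \<bar>A' - A\<bar> / (A * A')" using Apos by simp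
      also have "\<dots> \<le> L1 * d / (c * c)"
        using dA c_pos cA cA' L1nn d0 by (intro frac_le mult_mono) auto
      finally show ?thesis .
    qed
    have t2: "norm ((inverse A - inverse A') *\<^sub>R V') \<le> L1 * d / (c * c) * L1"
      using ia nV' L1nn d0 c_pos by (simp only: norm_scaleR real_norm_def) (intro mult_mono, auto)
    have "norm (foellmer_drift f x t - foellmer_drift f x' t) \<le> inverse c * (L2 * d) + L1 * d / (c * c) * L1"
      unfolding eq using t1 t2 norm_triangle_ineq[of "inverse A *\<^sub>R (V - V')" "(inverse A - inverse A') *\<^sub>R V'"]
      by linarith
    also have "\<dots> = (L2 / c + L1^2 / c^2) * d" by (simp add: field_simps power2_eq_square)
    also have "\<dots> \<le> (?M / c + ?M^2 / c^2) * d"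
    proof (intro mult_right_mono add_mono divide_right_mono power_mono d0)
    qed (use L1nn c_pos in auto)
    finally show "norm (foellmer_drift f x t - foellmer_drift f x' t) \<le> (?M / c + ?M^2 / c^2) * norm (x - x')"
      by (simp add: d_def)
  qed
qed

end
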